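(* Let $\mathcal{X}=\langle P,K,V\rangle$ be a polyhedral model. The logical equivalence relation $\equiv$ on $P$ is a simplicial bisimulation.
   Context: A $d$-simplex $\sigma\subseteq\mathbb{R}^m$ is the convex hull of $d+1$ affinely independent points $v_0,\dots,v_d$ (its vertices); the simplexes spanned by subsets of the vertices (including the empty simplex) are its faces, and $\tau\preceq\sigma$ means $\tau$ is a face of $\sigma$. The relative interior of $\sigma$ is $\tilde\sigma=\{\sum_i\lambda_iv_i:\lambda_i\in(0,1],\sum_i\lambda_i=1\}$. A simplicial complex $K$ is a finite set of simplexes of $\mathbb{R}^m$ closed under taking faces and such that the intersection of any two of its simplexes is a face of both. Its polyhedron is $|K|=\bigcup K$, with the subspace topology of $\mathbb{R}^m$; $\mathcal{C}$ and $\mathcal{I}$ denote closure and interior in this space. The cells of $K$ are the sets $\tilde\sigma$ for nonempty $\sigma\in K$; they form a partition $\tilde K$ of $|K|$. A path in a space $P$ is a continuous $\pi:[0,1]\to P$; $\pi(S)=\{\pi(s):s\in S\}$. Fix a finite set $AP$ of atomic propositions. A polyhedral model is $\mathcal{X}=\langle P,K,V\rangle$ with $K$ a simplicial complex, $P=|K|$, and $V:AP\to\mathcal{P}(P)$ such that each $V(p)$ is a union of cells of $K$ ($K$ is then called coherent with the model). SLCS formulas: $\phi::=\top\mid p\mid\neg\phi\mid\phi\wedge\phi\mid\Box\phi\mid\gamma(\phi,\phi)$, $p\in AP$. Semantics at $x\in P$, with $[\![\phi]\!]=\{x\in P:\mathcal{X},x\models\phi\}$: $\top$ always holds; $x\models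 p$ iff $x\in V(p)$; Boolean connectives as usual; $x\models\Box\phi$ iff $x\in\mathcal{I}([\![\phi]\!])$; $x\models\gamma(\phi,\psi)$ iff there is a path $\pi$ in $P$ with $\pi(0)=x$, $\pi((0,1))\subseteq[\![\phi]\!]$ and $\pi(1)\in[\![\psi]\!]$. Logical equivalence $\equiv$ on $P$: $x\equiv y$ iff $x$ and $y$ satisfy exactly the same SLCS formulas. A path $\pi$ is simplicial (w.r.t. $K$) if there are $s_0=0<s_1<\dots<s_k=1$ and cells $\tilde\sigma_1,\dots,\tilde\sigma_k$ of $K$ with $\pi((s_{i-1},s_i))\subseteq\tilde\sigma_i$ for all $i$. For $R\subseteq P\times P$, paths satisfy $\pi_1\hat R\pi_2$ iff $\pi_1(t)\,R\,\pi_2(t)$ for all $t\in[0,1]$. A relation $\sim\subseteq P\times P$ is a simplicial bisimulation if whenever $x\sim y$: (1) for all $p\in AP$, $x\in V(p)\iff y\in V(p)$; (2) for every simplicial path $\pi_x$ with $\pi_x(0)=x$ there is a simplicial path $\pi_y$ with $\pi_y(0)=y$ and $\pi_x\hat\sim\pi_y$; (3) for every simplicial path $\pi_y$ with $\pi_y(0)=y$ there is a simplicial path $\pi_x$ with $\pi_x(0)=x$ and $\pi_x\hat\sim\pi_y$. *)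

theory Defs
  imports "HOL-Analysis.Analysis"
begin

text \<open>Simplexes of a Euclidean space (including the empty simplex), given by
their vertex sets (affinely independent finite sets).\<close>

definition is_simplex :: "'a::euclidean_space set \<Rightarrow> bool" where
  "is_simplex \<sigma> \<longleftrightarrow> (\<exists>C. finite C \<and> \<not> affine_dependent C \<and> \<sigma> = convex hull C)"

definition face_of_simplex :: "'a::euclidean_space set \<Rightarrow> 'a set \<Rightarrow> bool" where
  "face_of_simplex \<tau> \<sigma> \<longleftrightarrow>
     (\<exists>C. finite C \<and> \<not> affine_dependent C \<and> \<sigma> = convex hull C \<and>
          (\<exists>D. D \<subseteq> C \<and> \<tau> = convex hull D))"

definition relint_simplex :: "'a::euclidean_space set \<Rightarrow> 'a set" where
  "relint_simplex \<sigma> = {x. \<exists>C l. finite C \<and> \<not> affine_dependent C \<and> \<sigma> = convex hull C \<and>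
       (\<forall>v\<in>C. 0 < l v \<and> l v \<le> 1) \<and> sum l C = 1 \<and> x = (\<Sum>v\<in>C. l v *\<^sub>R v)}"

definition simplicial_complex :: "'a::euclidean_space set set \<Rightarrow> bool" where
  "simplicial_complex K \<longleftrightarrow> finite K \<and> (\<forall>\<sigma>\<in>K. is_simplex \<sigma>) \<and>
     (\<forall>\<sigma>\<in>K. \<forall>\<tau>. face_of_simplex \<tau> \<sigma> \<longrightarrow> \<tau> \<in> K) \<and>
     (\<forall>\<sigma>\<in>K. \<forall>\<tau>\<in>K. face_of_simplex (\<sigma> \<inter> \<tau>) \<sigma> \<and> face_of_simplex (\<sigma> \<inter> \<tau>) \<tau>)"

definition cells :: "'a::euclidean_space set set \<Rightarrow> 'a set set" where
  "cells K = {relint_simplex \<sigma> | \<sigma>. \<sigma> \<in> K \<and> \<sigma> \<noteq> {}}"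

text \<open>A polyhedral model with polyhedron P = Union K; atomic propositions are the
elements of the finite type 'p.\<close>
definition polyhedral_model :: "'a::euclidean_space set set \<Rightarrow> ('p::finite \<Rightarrow> 'a set) \<Rightarrow> bool" where
  "polyhedral_model K V \<longleftrightarrow> simplicial_complex K \<and> (\<forall>p. \<exists>S\<subseteq>cells K. V p = \<Union>S)"

datatype 'p slcs = Top | Atom 'p | Neg "'p slcs" | And "'p slcs" "'p slcs"
  | Box "'p slcs" | Gamma "'p slcs" "'p slcs"

definition path_in :: "'a::euclidean_space set \<Rightarrow> (real \<Rightarrow> 'a) \<Rightarrow> bool" where
  "path_in P \<pi> \<longleftrightarrow> path \<pi> \<and> path_image \<pi> \<subseteq> P"

fun sem :: "'a::euclidean_space set set \<Rightarrow> ('p \<Rightarrow> 'a set) \<Rightarrow> 'p slcs \<Rightarrow> 'a set" where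
  "sem K V Top = \<Union>K"
| "sem K V (Atom p) = V p"
| "sem K V (Neg \<phi>) = \<Union>K - sem K V \<phi>"
| "sem K V (And \<phi> \<psi>) = sem K V \<phi> \<inter> sem K V \<psi>"
| "sem K V (Box \<phi>) = (top_of_set (\<Union>K)) interior_of (sem K V \<phi>)"
| "sem K V (Gamma \<phi> \<psi>) = {x \<in> \<Union>K. \<exists>\<pi>. path_in (\<Union>K) \<pi> \<and> \<pi> 0 = x \<and>
       \<pi> ` {0<..<1} \<subseteq> sem K V \<phi> \<and> \<pi> 1 \<in> sem K V \<psi>}"

definition logeq :: "'a::euclidean_space set set \<Rightarrow> ('p \<Rightarrow> 'a set) \<Rightarrow> 'a \<Rightarrow> 'a \<Rightarrow> bool" where
  "logeq K V x y \<longleftrightarrow> x \<in> \<Union>K \<and> y \<in> \<Union>K \<and> (\<forall>\<phi>. x \<in> sem K V \<phi> \<longleftrightarrow> y \<in> sem K V \<phi>)"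

definition simplicial_path :: "'a::euclidean_space set set \<Rightarrow> (real \<Rightarrow> 'a) \<Rightarrow> bool" where
  "simplicial_path K \<pi> \<longleftrightarrow> path_in (\<Union>K) \<pi> \<and>
     (\<exists>(k::nat) (s::nat \<Rightarrow> real) \<sigma>. s 0 = 0 \<and> s k = 1 \<and> (\<forall>i<k. s i < s (Suc i)) \<and>
        (\<forall>i\<in>{1..k}. \<sigma> i \<in> K \<and> \<sigma> i \<noteq> {} \<and> \<pi> ` {s (i - 1)<..<s i} \<subseteq> relint_simplex (\<sigma> i)))"

definition simplicial_bisimulation ::
  "'a::euclidean_space set set \<Rightarrow> ('p \<Rightarrow> 'a set) \<Rightarrow> ('a \<Rightarrow> 'a \<Rightarrow> bool) \<Rightarrow> bool" where
  "simplicial_bisimulation K V R \<longleftrightarrow>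
     (\<forall>x y. R x y \<longrightarrow> x \<in> \<Union>K \<and> y \<in> \<Union>K) \<and>
     (\<forall>x y. R x y \<longrightarrow>
        (\<forall>p. x \<in> V p \<longleftrightarrow> y \<in> V p) \<and>
        (\<forall>\<pi>x. simplicial_path K \<pi>x \<and> \<pi>x 0 = x \<longrightarrow>
           (\<exists>\<pi>y. simplicial_path K \<pi>y \<and> \<pi>y 0 = y \<and> (\<forall>t\<in>{0..1}. R (\<pi>x t) (\<pi>y t)))) \<and>
        (\<forall>\<pi>y. simplicial_path K \<pi>y \<and> \<pi>y 0 = y \<longrightarrow>
           (\<exists>\<pi>x. simplicial_path K \<pi>x \<and> \<pi>x 0 = x \<and> (\<forall>t\<in>{0..1}. R (\<pi>x t) (\<pi>y t)))))"

end

theory Submission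
  imports Defs
begin


lemma relint_sub: "relint_simplex \<sigma> \<subseteq> \<sigma>"
proof
  fix z assume "z \<in> relint_simplex \<sigma>"
  then obtain C l where C: "finite C" "\<sigma> = convex hull C" "\<forall>v\<in>C. 0 < l v \<and> l v \<le> 1"
    "sum l C = 1" "z = (\<Sum>v\<in>C. l v *\<^sub>R v)" unfolding relint_simplex_def by blast
  then show "z \<in> \<sigma>" by (auto simp: convex_hull_finite intro!: exI[of _ l] less_imp_le)
qed

lemma seg_relint:
  assumes q: "q \<in> relint_simplex \<rho>" and p: "p \<in> \<rho>" and t: "0 < t" "t \<le> 1"
  shows "(1 - t) *\<^sub>R p + t *\<^sub>R q \<in> relint_simplex \<rho>"
proof -
  obtain C l where C: "finite C" "\<not> affine_dependent C" "\<rho> = convex hull C" "\<forall>v\<in>C. 0 < l v \<and> l v \<le> 1"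
    "sum l C = 1" "q = (\<Sum>v\<in>C. l v *\<^sub>R v)" using q unfolding relint_simplex_def by blast
  obtain a where a: "\<forall>v\<in>C. 0 \<le> a v" "sum a C = 1" "p = (\<Sum>v\<in>C. a v *\<^sub>R v)"
    using p C(1,3) by (auto simp: convex_hull_finite)
  define m where "m v = (1 - t) * a v + t * l v" for v
  have pos: "\<forall>v\<in>C. 0 < m v" using a C t unfolding m_def
    by (metis add_nonneg_pos diff_ge_0_iff_ge mult_nonneg_nonneg mult_pos_pos)
  have s: "sum m C = 1" unfolding m_def using a C
    by (simp add: sum.distrib sum_distrib_left[symmetric])
  have le: "\<forall>v\<in>C. m v \<le> 1"
  proof
    fix v assume "v \<in> C"
    then have "m v \<le> sum m C" using pos C(1) by (intro member_le_sum) (auto simp: less_imp_le)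
    then show "m v \<le> 1" using s by simp
  qed
  have "(1 - t) *\<^sub>R p + t *\<^sub>R q = (\<Sum>v\<in>C. m v *\<^sub>R v)"
    unfolding m_def a(3) C(6) by (simp add: scaleR_sum_right sum.distrib scaleR_add_left)
  then show ?thesis unfolding relint_simplex_def using C pos le s by blast
qed

lemma relint_nonempty:
  assumes "is_simplex \<rho>" "\<rho> \<noteq> {}" shows "relint_simplex \<rho> \<noteq> {}"
proof -
  obtain C where C: "finite C" "\<not> affine_dependent C" "\<rho> = convex hull C"
    using assms unfolding is_simplex_def by blast
  have "C \<noteq> {}" using assms C by auto
  then have cp: "card C > 0" using C by (simp add: card_gt_0_iff)
  define l where "l = (\<lambda>v::'a. 1 / real (card C))"
  have "\<forall>v\<in>C. 0 < l v \<and> l v \<le> 1" using cp by (auto simp: l_def)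
  moreover have "sum l C = 1" using cp by (simp add: l_def)
  ultimately have "(\<Sum>v\<in>C. l v *\<^sub>R v) \<in> relint_simplex \<rho>"
    unfolding relint_simplex_def using C by blast
  then show ?thesis by blast
qed

lemma simplex_compact: "is_simplex \<sigma> \<Longrightarrow> compact \<sigma>"
  unfolding is_simplex_def by (auto intro: compact_convex_hull finite_imp_compact)

lemma vertices_unique:
  fixes C :: "'a::euclidean_space set"
  assumes "\<not> affine_dependent C" "\<not> affine_dependent C'" "convex hull C = convex hull C'"
  shows "C = C'"
proof (rule set_eqI)
  fix x
  have "x \<in> C \<longleftrightarrow> x extreme_point_of (convex hull C)"
    using extreme_point_of_convex_hull_affine_independent[OF assms(1)] by simp
  also have "\<dots> \<longleftrightarrow> x extreme_point_of (convex hull C')" using assms(3) by simp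
  also have "\<dots> \<longleftrightarrow> x \<in> C'"
    using extreme_point_of_convex_hull_affine_independent[OF assms(2)] by simp
  finally show "x \<in> C \<longleftrightarrow> x \<in> C'" .
qed

lemma relint_in_face:
  assumes K: "simplicial_complex K" and \<tau>: "\<tau> \<in> K" and \<sigma>: "\<sigma> \<in> K"
    and z: "z \<in> relint_simplex \<tau>" and zs: "z \<in> \<sigma>"
  shows "\<tau> \<subseteq> \<sigma>"
proof -
  obtain C l where C: "finite C" "\<not> affine_dependent C" "\<tau> = convex hull C" "\<forall>v\<in>C. 0 < l v \<and> l v \<le> 1"
    "sum l C = 1" "z = (\<Sum>v\<in>C. l v *\<^sub>R v)" using z unfolding relint_simplex_def by blast
  have "\<forall>\<sigma>\<in>K. \<forall>\<tau>\<in>K. face_of_simplex (\<sigma> \<inter> \<tau>) \<sigma> \<and> face_of_simplex (\<sigma> \<inter> \<tau>) \<tau>"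
    using K unfolding simplicial_complex_def by blast
  then have "face_of_simplex (\<sigma> \<inter> \<tau>) \<tau>" using \<tau> \<sigma> by blast
  then obtain C' D where C': "finite C'" "\<not> affine_dependent C'" "\<tau> = convex hull C'" "D \<subseteq> C'"
    "\<sigma> \<inter> \<tau> = convex hull D" unfolding face_of_simplex_def by blast
  have CC: "C' = C" using vertices_unique[OF C'(2) C(2)] C'(3) C(3) by simp
  have fD: "finite D" using C'(1,4) finite_subset by blast
  have "z \<in> \<tau>" using z relint_sub by blast
  then have "z \<in> convex hull D" using zs C'(5) by blast
  then obtain m where m: "\<forall>v\<in>D. 0 \<le> m v" "sum m D = 1" "z = (\<Sum>v\<in>D. m v *\<^sub>R v)"
    using fD by (auto simp: convex_hull_finite)
  have "C \<subseteq> D"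
  proof
    fix w assume wC: "w \<in> C"
    show "w \<in> D"
    proof (rule ccontr)
      assume wD: "w \<notin> D"
      define U where "U v = l v - (if v \<in> D then m v else 0)" for v
      have DC: "D \<subseteq> C" using C'(4) CC by simp
      have s1: "sum (\<lambda>v. if v \<in> D then m v else 0) C = sum m D"
        using C(1) DC by (simp add: sum.If_cases Int_absorb1)
      have s2: "(\<Sum>v\<in>C. (if v \<in> D then m v else 0) *\<^sub>R v) = (\<Sum>v\<in>D. m v *\<^sub>R v)"
      proof -
        have "(\<Sum>v\<in>C. (if v \<in> D then m v else 0) *\<^sub>R v) = (\<Sum>v\<in>C. if v \<in> D then m v *\<^sub>R v else 0)"
          by (rule sum.cong) auto
        also have "\<dots> = (\<Sum>v\<in>D. m v *\<^sub>R v)" using C(1) DC by (simp add: sum.If_cases Int_absorb1)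
        finally show ?thesis .
      qed
      have "sum U C = 0" unfolding U_def using s1 C(5) m(2) by (simp add: sum_subtractf)
      moreover have "(\<Sum>v\<in>C. U v *\<^sub>R v) = 0" unfolding U_def
        using s2 C(6) m(3) by (simp add: scaleR_diff_left sum_subtractf)
      moreover have "U w \<noteq> 0" using wD wC C(4) by (auto simp: U_def)
      ultimately have "affine_dependent C" unfolding affine_dependent_explicit_finite[OF C(1)]
        using wC by blast
      then show False using C(2) by blast
    qed
  qed
  then have "convex hull C \<subseteq> convex hull D" by (rule hull_mono)
  then show ?thesis using C(3) C'(5) by blast
qed

lemma cell_unique:
  assumes "simplicial_complex K" "\<tau> \<in> K" "\<rho> \<in> K" "z \<in> relint_simplex \<tau>" "z \<in> relint_simplex \<rho>"
  shows "\<tau> = \<rho>"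
proof -
  have "z \<in> \<rho>" "z \<in> \<tau>" using assms(4,5) relint_sub by blast+
  then have "\<tau> \<subseteq> \<rho>" "\<rho> \<subseteq> \<tau>"
    using relint_in_face[OF assms(1,2,3,4)] relint_in_face[OF assms(1,3,2,5)] by blast+
  then show ?thesis by (rule subset_antisym)
qed

lemma cell_exists:
  assumes K: "simplicial_complex K" and z: "z \<in> \<Union>K"
  shows "\<exists>\<rho>\<in>K. \<rho> \<noteq> {} \<and> z \<in> relint_simplex \<rho>"
proof -
  obtain \<sigma> where \<sigma>: "\<sigma> \<in> K" "z \<in> \<sigma>" using z by blast
  have "is_simplex \<sigma>" using K \<sigma>(1) unfolding simplicial_complex_def by blast
  then obtain C where C: "finite C" "\<not> affine_dependent C" "\<sigma> = convex hull C"
    unfolding is_simplex_def by blast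
  obtain a where a: "\<forall>v\<in>C. 0 \<le> a v" "sum a C = 1" "z = (\<Sum>v\<in>C. a v *\<^sub>R v)"
    using \<sigma>(2) C by (auto simp: convex_hull_finite)
  define D where "D = {v\<in>C. a v \<noteq> 0}"
  have DC: "D \<subseteq> C" by (auto simp: D_def)
  have fD: "finite D" using C(1) DC finite_subset by blast
  have z0: "\<forall>i\<in>C - D. a i = 0" by (simp add: D_def)
  have sD: "sum a D = 1" using a(2) sum.mono_neutral_right[OF C(1) DC, of a] z0 by simp
  have zD: "z = (\<Sum>v\<in>D. a v *\<^sub>R v)" using a(3) sum.mono_neutral_right[OF C(1) DC, of "\<lambda>v. a v *\<^sub>R v"] z0
    by simp
  have Dne: "D \<noteq> {}" using sD by auto
  have "face_of_simplex (convex hull D) \<sigma>" unfolding face_of_simplex_def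
    apply (rule exI[of _ C])
    apply (intro conjI)
       apply (rule C(1))
      apply (rule C(2))
     apply (rule C(3))
    apply (rule exI[of _ D])
    using DC by simp
  moreover have "\<forall>\<sigma>\<in>K. \<forall>\<tau>. face_of_simplex \<tau> \<sigma> \<longrightarrow> \<tau> \<in> K"
    using K unfolding simplicial_complex_def by blast
  ultimately have inK: "convex hull D \<in> K" using \<sigma>(1) by blast
  have pos: "\<forall>v\<in>D. 0 < a v \<and> a v \<le> 1"
  proof
    fix v assume v: "v \<in> D"
    have "a v \<le> sum a D" using v fD a(1) DC by (intro member_le_sum) auto
    moreover have "a v \<noteq> 0" "v \<in> C" using v by (auto simp: D_def)
    moreover have "0 \<le> a v" using a(1) \<open>v \<in> C\<close> by blast
    ultimately show "0 < a v \<and> a v \<le> 1" using sD by simp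
  qed
  have "z \<in> relint_simplex (convex hull D)" unfolding relint_simplex_def
    apply (rule CollectI, rule exI[of _ D], rule exI[of _ a])
    using fD affine_independent_subset[OF C(2) DC] pos sD zD by simp
  moreover have "convex hull D \<noteq> {}" using Dne by simp
  ultimately show ?thesis using inK by blast
qed

lemma open_star:
  assumes K: "simplicial_complex K" and \<tau>: "\<tau> \<in> K" and z: "z \<in> relint_simplex \<tau>"
  shows "\<exists>e>0. \<forall>w\<in>\<Union>K. dist w z < e \<longrightarrow> (\<exists>\<rho>\<in>K. \<rho> \<noteq> {} \<and> \<tau> \<subseteq> \<rho> \<and> w \<in> relint_simplex \<rho>)"
proof -
  define B where "B = \<Union>{\<sigma>\<in>K. \<not> \<tau> \<subseteq> \<sigma>}"
  have cl: "\<forall>\<sigma>\<in>K. closed \<sigma>"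
  proof
    fix \<sigma> assume "\<sigma> \<in> K"
    then have "is_simplex \<sigma>" using K unfolding simplicial_complex_def by blast
    then show "closed \<sigma>" by (intro compact_imp_closed simplex_compact)
  qed
  have "finite K" using K unfolding simplicial_complex_def by blast
  then have "finite {\<sigma>\<in>K. \<not> \<tau> \<subseteq> \<sigma>}" by simp
  moreover have "\<forall>T\<in>{\<sigma>\<in>K. \<not> \<tau> \<subseteq> \<sigma>}. closed T" using cl by blast
  ultimately have "closed B" unfolding B_def by (rule closed_Union)
  moreover have "z \<notin> B" unfolding B_def using relint_in_face[OF K \<tau> _ z] by blast
  ultimately obtain e where e: "e > 0" "ball z e \<subseteq> - B"
    by (metis ComplI open_Compl open_contains_ball)
  have "\<forall>w\<in>\<Union>K. dist w z < e \<longrightarrow> (\<exists>\<rho>\<in>K. \<rho> \<noteq> {} \<and> \<tau> \<subseteq> \<rho> \<and> w \<in> relint_simplex \<rho>)"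
  proof (intro ballI impI)
    fix w assume w: "w \<in> \<Union>K" "dist w z < e"
    obtain \<rho> where \<rho>: "\<rho>\<in>K" "\<rho> \<noteq> {}" "w \<in> relint_simplex \<rho>" using cell_exists[OF K w(1)] by blast
    have "w \<in> ball z e" using w(2) by (simp add: dist_commute)
    then have "w \<notin> B" using e(2) by blast
    moreover have "w \<in> \<rho>" using \<rho>(3) relint_sub by blast
    ultimately have "\<tau> \<subseteq> \<rho>" using \<rho>(1) unfolding B_def by blast
    then show "\<exists>\<rho>\<in>K. \<rho> \<noteq> {} \<and> \<tau> \<subseteq> \<rho> \<and> w \<in> relint_simplex \<rho>" using \<rho> by blast
  qed
  then show ?thesis using e(1) by blast
qed



definition glue :: "real \<Rightarrow> (real \<Rightarrow> 'a) \<Rightarrow> (real \<Rightarrow> 'a) \<Rightarrow> real \<Rightarrow> 'a" where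
  "glue a f g t = (if t \<le> a then f (t / a) else g ((t - a) / (1 - a)))"

lemma glue_path:
  fixes f g :: "real \<Rightarrow> 'a::real_normed_vector"
  assumes a: "0 < a" "a < 1" and f: "path f" and g: "path g" and fg: "f 1 = g 0"
  shows "path (glue a f g)"
proof -
  have "continuous_on {0..1} (\<lambda>t. if t \<le> a then f (t / a) else g ((t - a) / (1 - a)))"
  proof (rule continuous_on_cases_le[where h="\<lambda>t. t"])
    show "continuous_on {t \<in> {0..1}. t \<le> a} (\<lambda>t. f (t / a))"
      using f a unfolding path_def
      by (intro continuous_on_compose2[of "{0..1}" f _ "\<lambda>t. t / a"])
         (auto intro!: continuous_intros simp: divide_simps)
    show "continuous_on {t \<in> {0..1}. a \<le> t} (\<lambda>t. g ((t - a) / (1 - a)))"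
      using g a unfolding path_def
      by (intro continuous_on_compose2[of "{0..1}" g _ "\<lambda>t. (t - a) / (1 - a)"])
         (auto intro!: continuous_intros simp: divide_simps)
  qed (use a fg in \<open>auto intro!: continuous_intros\<close>)
  then show ?thesis unfolding path_def glue_def[abs_def] .
qed

lemma glue_image:
  assumes a: "0 < a" "a < 1" and t: "t \<in> {0..1}"
  shows "glue a f g t \<in> f ` {0..1} \<union> g ` {0..1}"
proof (cases "t \<le> a")
  case True
  then have "t / a \<in> {0..1}" using a t by (auto simp: divide_simps)
  then show ?thesis using True by (auto simp: glue_def)
next
  case False
  then have "(t - a) / (1 - a) \<in> {0..1}" using a t by (auto simp: divide_simps)
  then show ?thesis using False by (auto simp: glue_def)
qed

lemma glue_open:
  assumes a: "0 < a" "a < 1" and t: "t \<in> {0<..<1}"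
  shows "glue a f g t \<in> f ` {0<..1} \<union> g ` {0<..<1}"
proof (cases "t \<le> a")
  case True
  then have "t / a \<in> {0<..1}" using a t by (auto simp: divide_simps)
  then show ?thesis using True by (auto simp: glue_def)
next
  case False
  then have "(t - a) / (1 - a) \<in> {0<..<1}" using a t by (auto simp: divide_simps)
  then show ?thesis using False by (auto simp: glue_def)
qed

lemma glue_0: "0 < a \<Longrightarrow> glue a f g 0 = f 0" by (simp add: glue_def)
lemma glue_1: "a < 1 \<Longrightarrow> glue a f g 1 = g 1" by (simp add: glue_def)

lemma glue_path_in:
  fixes f g :: "real \<Rightarrow> 'a::euclidean_space"
  assumes a: "0 < a" "a < 1" and f: "path_in P f" and g: "path_in P g" and fg: "f 1 = g 0"
  shows "path_in P (glue a f g)"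
proof -
  have pf: "path f" "f ` {0..1} \<subseteq> P" using f by (simp_all add: path_in_def path_image_def)
  have pg: "path g" "g ` {0..1} \<subseteq> P" using g by (simp_all add: path_in_def path_image_def)
  have p: "path (glue a f g)" by (rule glue_path[OF a pf(1) pg(1) fg])
  have "glue a f g ` {0..1} \<subseteq> P"
  proof
    fix z assume "z \<in> glue a f g ` {0..1}"
    then obtain t where t: "t \<in> {0..1}" "z = glue a f g t" by blast
    then have "z \<in> f ` {0..1} \<union> g ` {0..1}" using glue_image[OF a t(1)] by simp
    then show "z \<in> P" using pf(2) pg(2) by blast
  qed
  then show ?thesis using p by (simp add: path_in_def path_image_def)
qed

lemma path_cont_at:
  assumes "path_in P \<pi>" "t \<in> {0..1}" "e > 0"
  shows "\<exists>\<delta>>0. \<forall>t'\<in>{0..1}. dist t' t < \<delta> \<longrightarrow> dist (\<pi> t') (\<pi> t) < e"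
proof -
  have "continuous_on {0..1} \<pi>" using assms(1) by (simp add: path_in_def path_def)
  then show ?thesis using assms(2,3) unfolding continuous_on_iff by blast
qed

lemma relint_in_union: "\<tau> \<in> K \<Longrightarrow> y \<in> relint_simplex \<tau> \<Longrightarrow> y \<in> \<Union>K"
  using relint_sub by blast

lemma sem_subset:
  assumes "polyhedral_model K V" shows "sem K V \<phi> \<subseteq> \<Union>K"
proof (induction \<phi>)
  case (Atom p)
  obtain S where S: "S \<subseteq> cells K" "V p = \<Union>S" using assms unfolding polyhedral_model_def by blast
  show ?case
  proof
    fix x assume "x \<in> sem K V (Atom p)"
    then obtain c where c: "c \<in> S" "x \<in> c" using S by auto
    then obtain \<rho> where "\<rho> \<in> K" "c = relint_simplex \<rho>" using S(1) unfolding cells_def by blast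
    then show "x \<in> \<Union>K" using c relint_in_union by blast
  qed
next
  case (Box \<phi>)
  then show ?case using interior_of_subset_topspace[of "top_of_set (\<Union>K)"] by simp
qed auto

lemma sem_inv:
  assumes M: "polyhedral_model K V"
  shows "\<tau> \<in> K \<Longrightarrow> x \<in> relint_simplex \<tau> \<Longrightarrow> y \<in> relint_simplex \<tau> \<Longrightarrow> x \<in> sem K V \<phi> \<Longrightarrow> y \<in> sem K V \<phi>"
proof (induction \<phi> arbitrary: \<tau> x y)
  case Top
  show ?case using relint_in_union[OF Top(1,3)] by simp
next
  case (Atom p)
  have K: "simplicial_complex K" using M by (simp add: polyhedral_model_def)
  obtain S where S: "S \<subseteq> cells K" "V p = \<Union>S" using M unfolding polyhedral_model_def by blast
  obtain c where c: "c \<in> S" "x \<in> c" using Atom(4) S by auto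
  then obtain \<rho> where \<rho>: "\<rho> \<in> K" "c = relint_simplex \<rho>" using S unfolding cells_def by blast
  have "\<rho> = \<tau>" using cell_unique[OF K \<rho>(1) Atom(1)] \<rho>(2) c(2) Atom(2) by blast
  then have "y \<in> c" using Atom(3) \<rho>(2) by simp
  then show ?case using c(1) S(2) by auto
next
  case (Neg \<phi>)
  have yK: "y \<in> \<Union>K" using relint_in_union[OF Neg(2,4)] .
  have "y \<notin> sem K V \<phi>"
  proof
    assume "y \<in> sem K V \<phi>"
    then have "x \<in> sem K V \<phi>" using Neg.IH[OF Neg(2) Neg(4) Neg(3)] by blast
    then show False using Neg(5) by simp
  qed
  then show ?case using yK by simp
next
  case (And \<phi>1 \<phi>2)
  have "x \<in> sem K V \<phi>1" "x \<in> sem K V \<phi>2" using And(6) by simp_all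
  then have "y \<in> sem K V \<phi>1" "y \<in> sem K V \<phi>2"
    using And.IH(1)[OF And(3,4,5)] And.IH(2)[OF And(3,4,5)] by blast+
  then show ?case by simp
next
  case (Box \<phi>)
  have K: "simplicial_complex K" using M by (simp add: polyhedral_model_def)
  from Box.prems(4) obtain T where T: "openin (top_of_set (\<Union>K)) T" "x \<in> T" "T \<subseteq> sem K V \<phi>"
    by (auto simp: interior_of_def)
  obtain Op where O: "open Op" "T = \<Union>K \<inter> Op" using T(1) by (auto simp: openin_open)
  have "x \<in> Op" using O(2) T(2) by blast
  then obtain e where e: "e > 0" "ball x e \<subseteq> Op" using O(1) open_contains_ball by blast
  have claim: "relint_simplex \<rho> \<subseteq> sem K V \<phi>" if \<rho>: "\<rho> \<in> K" "\<tau> \<subseteq> \<rho>" for \<rho>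
  proof
    fix q assume q: "q \<in> relint_simplex \<rho>"
    define d where "d = norm (q - x)"
    define t where "t = e / (e + d)"
    have d0: "d \<ge> 0" by (simp add: d_def)
    have t: "0 < t" "t \<le> 1" using e d0 by (auto simp: t_def divide_simps)
    define w where "w = (1 - t) *\<^sub>R x + t *\<^sub>R q"
    have "x \<in> \<tau>" using Box.prems(2) relint_sub by blast
    then have xr: "x \<in> \<rho>" using \<rho>(2) by blast
    have w: "w \<in> relint_simplex \<rho>" unfolding w_def by (rule seg_relint[OF q xr t])
    have "x - w = t *\<^sub>R (x - q)" by (simp add: w_def algebra_simps)
    then have "dist x w = t * d" using t by (simp add: dist_norm d_def norm_minus_commute)
    also have "\<dots> < e" using e d0 by (simp add: t_def divide_simps)
    finally have "w \<in> ball x e" by simp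
    then have "w \<in> Op" using e(2) by blast
    moreover have "w \<in> \<Union>K" using relint_in_union[OF \<rho>(1) w] .
    ultimately have "w \<in> T" using O(2) by blast
    then have "w \<in> sem K V \<phi>" using T(3) by blast
    then show "q \<in> sem K V \<phi>" using Box.IH[OF \<rho>(1) w q] by blast
  qed
  obtain e' where e': "e' > 0" "\<forall>w\<in>\<Union>K. dist w y < e' \<longrightarrow> (\<exists>\<rho>\<in>K. \<rho> \<noteq> {} \<and> \<tau> \<subseteq> \<rho> \<and> w \<in> relint_simplex \<rho>)"
    using open_star[OF K Box.prems(1,3)] by blast
  define T' where "T' = \<Union>K \<inter> ball y e'"
  have "openin (top_of_set (\<Union>K)) T'" unfolding T'_def openin_open by blast
  moreover have "y \<in> T'" unfolding T'_def using e'(1) relint_in_union[OF Box.prems(1,3)] by simp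
  moreover have "T' \<subseteq> sem K V \<phi>"
  proof
    fix w assume "w \<in> T'"
    then have w: "w \<in> \<Union>K" "dist w y < e'" unfolding T'_def by (auto simp: dist_commute)
    then obtain \<rho> where "\<rho> \<in> K" "\<tau> \<subseteq> \<rho>" "w \<in> relint_simplex \<rho>" using e'(2) by blast
    then show "w \<in> sem K V \<phi>" using claim by blast
  qed
  ultimately have "y \<in> top_of_set (\<Union>K) interior_of sem K V \<phi>" unfolding interior_of_def by blast
  then show ?case by simp
next
  case (Gamma \<phi>1 \<phi>2)
  have K: "simplicial_complex K" using M by (simp add: polyhedral_model_def)
  from Gamma.prems(4) obtain \<pi> where \<pi>: "path_in (\<Union>K) \<pi>" "\<pi> 0 = x" "\<pi> ` {0<..<1} \<subseteq> sem K V \<phi>1"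
    "\<pi> 1 \<in> sem K V \<phi>2" by auto
  obtain e where e: "e > 0" "\<forall>w\<in>\<Union>K. dist w x < e \<longrightarrow> (\<exists>\<rho>\<in>K. \<rho> \<noteq> {} \<and> \<tau> \<subseteq> \<rho> \<and> w \<in> relint_simplex \<rho>)"
    using open_star[OF K Gamma.prems(1,2)] by blast
  obtain \<delta> where \<delta>: "\<delta> > 0" "\<forall>t'\<in>{0..1}. dist t' 0 < \<delta> \<longrightarrow> dist (\<pi> t') (\<pi> 0) < e"
    using path_cont_at[OF \<pi>(1) _ e(1), of 0] by auto
  define t1 where "t1 = min (\<delta>/2) (1/2)"
  have t1: "0 < t1" "t1 < 1" "t1 < \<delta>" using \<delta>(1) by (auto simp: t1_def)
  have "dist t1 0 < \<delta>" using t1 by simp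
  then have "dist (\<pi> t1) x < e" using \<delta>(2) t1 \<pi>(2) by auto
  moreover have pt1K: "\<pi> t1 \<in> \<Union>K"
  proof -
    have "\<pi> t1 \<in> \<pi> ` {0..1}" using t1 by auto
    then show ?thesis using \<pi>(1) unfolding path_in_def path_image_def by blast
  qed
  ultimately obtain \<rho> where \<rho>: "\<rho> \<in> K" "\<tau> \<subseteq> \<rho>" "\<pi> t1 \<in> relint_simplex \<rho>" using e(2) by blast
  have pt1: "\<pi> t1 \<in> sem K V \<phi>1" using \<pi>(3) t1 by auto
  have "y \<in> \<tau>" using Gamma.prems(3) relint_sub by blast
  then have yr: "y \<in> \<rho>" using \<rho>(2) by blast
  define g where "g = glue (1/2) (linepath y (\<pi> t1)) (subpath t1 1 \<pi>)"
  have "is_simplex \<rho>" using K \<rho>(1) unfolding simplicial_complex_def by blast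
  then have "convex \<rho>" unfolding is_simplex_def by (auto intro: convex_convex_hull)
  moreover have "\<pi> t1 \<in> \<rho>" using \<rho>(3) relint_sub by blast
  ultimately have "closed_segment y (\<pi> t1) \<subseteq> \<rho>" using yr by (simp add: closed_segment_subset)
  then have l: "path_in (\<Union>K) (linepath y (\<pi> t1))" using \<rho>(1) by (auto simp: path_in_def)
  have "path_image (subpath t1 1 \<pi>) \<subseteq> path_image \<pi>"
    using t1 by (intro path_image_subpath_subset) auto
  then have r: "path_in (\<Union>K) (subpath t1 1 \<pi>)"
    using \<pi>(1) t1 by (auto simp: path_in_def intro!: path_subpath)
  have gp: "path_in (\<Union>K) g" unfolding g_def
    by (rule glue_path_in[OF _ _ l r]) (auto simp: subpath_def linepath_def)
  have g0: "g 0 = y" by (simp add: g_def glue_0 linepath_def)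
  have g1: "g 1 = \<pi> 1" by (simp add: g_def glue_1 subpath_def)
  have "g ` {0<..<1} \<subseteq> sem K V \<phi>1"
  proof
    fix z assume "z \<in> g ` {0<..<1}"
    then obtain t where t: "t \<in> {0<..<1}" "z = g t" by blast
    then have "z \<in> linepath y (\<pi> t1) ` {0<..1} \<union> subpath t1 1 \<pi> ` {0<..<1}"
      unfolding g_def using glue_open[of "1/2" t] by auto
    then show "z \<in> sem K V \<phi>1"
    proof
      assume "z \<in> linepath y (\<pi> t1) ` {0<..1}"
      then obtain u where u: "0 < u" "u \<le> 1" "z = (1 - u) *\<^sub>R y + u *\<^sub>R \<pi> t1"
        by (auto simp: linepath_def)
      have "z \<in> relint_simplex \<rho>" using seg_relint[OF \<rho>(3) yr u(1,2)] u(3) by simp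
      then show ?thesis using Gamma.IH(1)[OF \<rho>(1) \<rho>(3) _ pt1] by blast
    next
      assume "z \<in> subpath t1 1 \<pi> ` {0<..<1}"
      then obtain u where u: "0 < u" "u < 1" "z = \<pi> ((1 - t1) * u + t1)"
        by (auto simp: subpath_def)
      have "0 < (1 - t1) * u" using u t1 by simp
      moreover have "(1 - t1) * u < 1 - t1" using u t1 by simp
      ultimately have "0 < (1 - t1) * u + t1" "(1 - t1) * u + t1 < 1" using t1 by linarith+
      then have "(1 - t1) * u + t1 \<in> {0<..<1}" by simp
      then show ?thesis using \<pi>(3) u(3) by blast
    qed
  qed
  moreover have "y \<in> \<Union>K" using relint_in_union[OF Gamma.prems(1,3)] .
  ultimately show ?case using gp g0 g1 \<pi>(4) by auto
qed



lemma smono: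
  assumes "\<forall>i<k. s i < s (Suc i)" "i \<le> j" "j \<le> k"
  shows "(s i :: real) \<le> s j"
  using assms(2,3)
proof (induction j)
  case 0 then show ?case by simp
next
  case (Suc j)
  show ?case
  proof (cases "i = Suc j")
    case False
    then have "i \<le> j" using Suc by simp
    then have "s i \<le> s j" using Suc by simp
    also have "\<dots> < s (Suc j)" using assms(1) Suc by simp
    finally show ?thesis by simp
  qed simp
qed

lemma simp_single:
  assumes "path_in (\<Union>K) \<pi>" "\<rho> \<in> K" "\<rho> \<noteq> {}" "\<pi> ` {0<..<1} \<subseteq> relint_simplex \<rho>"
  shows "simplicial_path K \<pi>"
  unfolding simplicial_path_def
  apply (rule conjI, rule assms(1))
  apply (rule exI[of _ 1], rule exI[of _ "\<lambda>i. real i"], rule exI[of _ "\<lambda>_. \<rho>"])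
  using assms by auto

lemma simp_path_in: "simplicial_path K \<pi> \<Longrightarrow> path_in (\<Union>K) \<pi>"
  by (simp add: simplicial_path_def)

lemma simp_glue:
  assumes a: "0 < a" "a < 1" and f: "simplicial_path K f" and g: "simplicial_path K g"
    and fg: "f 1 = g 0"
  shows "simplicial_path K (glue a f g)"
proof -
  obtain k1 s1 \<sigma>1 where F: "s1 0 = 0" "s1 k1 = 1" "\<forall>i<k1. s1 i < s1 (Suc i)"
    "\<forall>i\<in>{1..k1}. \<sigma>1 i \<in> K \<and> \<sigma>1 i \<noteq> {} \<and> f ` {s1 (i - 1)<..<s1 i} \<subseteq> relint_simplex (\<sigma>1 i)"
    using f unfolding simplicial_path_def by blast
  obtain k2 s2 \<sigma>2 where G: "s2 0 = 0" "s2 k2 = 1" "\<forall>i<k2. s2 i < s2 (Suc i)"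
    "\<forall>i\<in>{1..k2}. \<sigma>2 i \<in> K \<and> \<sigma>2 i \<noteq> {} \<and> g ` {s2 (i - 1)<..<s2 i} \<subseteq> relint_simplex (\<sigma>2 i)"
    using g unfolding simplicial_path_def by blast
  have k2: "k2 > 0" using G(1,2) by (cases k2) auto
  define k where "k = k1 + k2"
  define s where "s i = (if i \<le> k1 then a * s1 i else a + (1 - a) * s2 (i - k1))" for i
  define \<sigma> where "\<sigma> i = (if i \<le> k1 then \<sigma>1 i else \<sigma>2 (i - k1))" for i
  have pin: "path_in (\<Union>K) (glue a f g)"
    using glue_path_in[OF a simp_path_in[OF f] simp_path_in[OF g] fg] .
  have s0: "s 0 = 0" using F(1) by (simp add: s_def)
  have sk: "s k = 1" using G(2) k2 by (simp add: s_def k_def)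
  have mono: "\<forall>i<k. s i < s (Suc i)"
  proof (intro allI impI)
    fix i assume i: "i < k"
    consider "i < k1" | "i = k1" | "i > k1" by linarith
    then show "s i < s (Suc i)"
    proof cases
      case 1 then show ?thesis using F(3) a by (simp add: s_def)
    next
      case 2
      have "s2 0 < s2 (Suc 0)" using G(3) k2 by simp
      then show ?thesis using 2 F(2) G(1) a by (simp add: s_def)
    next
      case 3
      then have "i - k1 < k2" "Suc i - k1 = Suc (i - k1)" using i by (auto simp: k_def)
      then show ?thesis using 3 G(3) a by (simp add: s_def)
    qed
  qed
  have pieces: "\<forall>i\<in>{1..k}. \<sigma> i \<in> K \<and> \<sigma> i \<noteq> {} \<and> glue a f g ` {s (i - 1)<..<s i} \<subseteq> relint_simplex (\<sigma> i)"
  proof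
    fix i assume i: "i \<in> {1..k}"
    show "\<sigma> i \<in> K \<and> \<sigma> i \<noteq> {} \<and> glue a f g ` {s (i - 1)<..<s i} \<subseteq> relint_simplex (\<sigma> i)"
    proof (cases "i \<le> k1")
      case True
      have i1: "i \<in> {1..k1}" using i True by auto
      have sle: "s1 i \<le> 1" using smono[OF F(3), of i k1] True F(2) by simp
      have "glue a f g ` {s (i - 1)<..<s i} \<subseteq> relint_simplex (\<sigma>1 i)"
      proof
        fix z assume "z \<in> glue a f g ` {s (i - 1)<..<s i}"
        then obtain t where t: "s (i - 1) < t" "t < s i" "z = glue a f g t" by auto
        have "i - 1 \<le> k1" using True by simp
        then have t': "a * s1 (i - 1) < t" "t < a * s1 i" using t True by (auto simp: s_def)
        have "t \<le> a" using t'(2) sle a by (smt (verit) mult_left_le)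
        then have "z = f (t / a)" using t(3) by (simp add: glue_def)
        moreover have "t / a \<in> {s1 (i - 1)<..<s1 i}" using t' a by (auto simp: field_simps)
        ultimately show "z \<in> relint_simplex (\<sigma>1 i)" using F(4) i1 by blast
      qed
      then show ?thesis using F(4) i1 True by (simp add: \<sigma>_def)
    next
      case False
      define j where "j = i - k1"
      have j: "j \<in> {1..k2}" using i False by (auto simp: j_def k_def)
      have si: "s i = a + (1 - a) * s2 j" using False by (simp add: s_def j_def)
      have si1: "s (i - 1) = a + (1 - a) * s2 (j - 1)"
      proof (cases "i - 1 \<le> k1")
        case True
        then have "i - 1 = k1" "j = 1" using False by (auto simp: j_def)
        then show ?thesis using F(2) G(1) by (simp add: s_def)
      next
        case False
        then show ?thesis by (simp add: s_def j_def)
      qed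
      have "j - 1 \<le> k2" using j by auto
      then have s2nn: "s2 (j - 1) \<ge> 0" using smono[OF G(3), of 0 "j - 1"] G(1) by simp
      have "glue a f g ` {s (i - 1)<..<s i} \<subseteq> relint_simplex (\<sigma>2 j)"
      proof
        fix z assume "z \<in> glue a f g ` {s (i - 1)<..<s i}"
        then obtain t where t: "s (i - 1) < t" "t < s i" "z = glue a f g t" by auto
        have "(1 - a) * s2 (j - 1) \<ge> 0" using s2nn a by simp
        then have "t > a" using t(1) si1 by simp
        then have "z = g ((t - a) / (1 - a))" using t(3) by (simp add: glue_def)
        moreover have "(t - a) / (1 - a) \<in> {s2 (j - 1)<..<s2 j}" using t si si1 a
          by (auto simp: field_simps)
        ultimately show "z \<in> relint_simplex (\<sigma>2 j)" using G(4) j by blast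
      qed
      then show ?thesis using G(4) j False by (simp add: \<sigma>_def j_def)
    qed
  qed
  show ?thesis unfolding simplicial_path_def
    using pin s0 sk mono pieces by blast
qed

lemma seg_fwd: "p \<in> \<rho> \<Longrightarrow> q \<in> relint_simplex \<rho> \<Longrightarrow> linepath p q ` {0<..1} \<subseteq> relint_simplex \<rho>"
  by (auto simp: linepath_def intro!: seg_relint)

lemma seg_bwd:
  assumes "p \<in> relint_simplex \<rho>" "q \<in> \<rho>"
  shows "linepath p q ` {0..<1} \<subseteq> relint_simplex \<rho>"
proof
  fix z assume "z \<in> linepath p q ` {0..<1}"
  then obtain t where t: "0 \<le> t" "t < 1" "z = (1 - t) *\<^sub>R p + t *\<^sub>R q" by (auto simp: linepath_def)
  have "(1 - (1 - t)) *\<^sub>R q + (1 - t) *\<^sub>R p \<in> relint_simplex \<rho>"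
    using seg_relint[OF assms(1,2), of "1 - t"] t by simp
  then show "z \<in> relint_simplex \<rho>" using t(3) by (simp add: add.commute)
qed

lemma seg_path_in:
  assumes K: "simplicial_complex K" and \<rho>: "\<rho> \<in> K" and pq: "p \<in> \<rho>" "q \<in> \<rho>"
  shows "path_in (\<Union>K) (linepath p q)"
proof -
  have "convex \<rho>" using K \<rho> unfolding simplicial_complex_def is_simplex_def
    by (auto intro: convex_convex_hull)
  then have "closed_segment p q \<subseteq> \<rho>" using pq by (simp add: closed_segment_subset)
  then show ?thesis using \<rho> by (auto simp: path_in_def)
qed



lemma lin0: "linepath a b 0 = a" by (simp add: linepath_def)
lemma lin1: "linepath a b 1 = b" by (simp add: linepath_def)

lemma open_sub_half: "f ` {0<..<1} \<subseteq> f ` {0<..(1::real)}" by (intro image_mono) auto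
lemma open_sub_half2: "f ` {0<..<1} \<subseteq> f ` {0..<(1::real)}" by (intro image_mono) auto

lemma graph_path:
  assumes K: "simplicial_complex K"
    and R: "(\<rho>0, \<rho>1) \<in> Rel\<^sup>*"
    and Rel: "Rel = {(\<rho>, \<tau>). \<rho> \<in> N \<and> \<tau> \<in> N \<and> (\<rho> \<subseteq> \<tau> \<or> \<tau> \<subseteq> \<rho>)}"
    and N: "N = {\<rho>\<in>K. \<rho> \<noteq> {} \<and> relint_simplex \<rho> \<subseteq> A}"
    and \<rho>1: "\<rho>1 \<in> N"
  shows "\<forall>a\<in>relint_simplex \<rho>0. \<forall>b\<in>relint_simplex \<rho>1. \<exists>q. simplicial_path K q \<and> q 0 = a \<and> q 1 = b \<and> q ` {0..1} \<subseteq> A"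
  using R
proof (induction rule: converse_rtrancl_induct)
  case base
  have \<rho>1': "\<rho>1 \<in> K" "\<rho>1 \<noteq> {}" "relint_simplex \<rho>1 \<subseteq> A" using \<rho>1 N by auto
  show ?case
  proof (intro ballI)
    fix a b assume a: "a \<in> relint_simplex \<rho>1" and b: "b \<in> relint_simplex \<rho>1"
    have ar: "a \<in> \<rho>1" using a relint_sub by blast
    have br: "b \<in> \<rho>1" using b relint_sub by blast
    have seg: "linepath a b ` {0<..1} \<subseteq> relint_simplex \<rho>1" by (rule seg_fwd[OF ar b])
    have pin: "path_in (\<Union>K) (linepath a b)" by (rule seg_path_in[OF K \<rho>1'(1) ar br])
    have sp: "simplicial_path K (linepath a b)"
      by (rule simp_single[OF pin \<rho>1'(1) \<rho>1'(2)]) (rule subset_trans[OF open_sub_half seg])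
    have "linepath a b ` {0..1} \<subseteq> A"
    proof
      fix z assume "z \<in> linepath a b ` {0..1}"
      then obtain t where t: "t \<in> {0..1}" "z = linepath a b t" by blast
      show "z \<in> A"
      proof (cases "t = 0")
        case True then show ?thesis using t a \<rho>1'(3) by (auto simp: lin0)
      next
        case False
        then have "t \<in> {0<..1}" using t by auto
        then show ?thesis using t seg \<rho>1'(3) by blast
      qed
    qed
    then show "\<exists>q. simplicial_path K q \<and> q 0 = a \<and> q 1 = b \<and> q ` {0..1} \<subseteq> A"
      using sp by (intro exI[of _ "linepath a b"]) (simp add: lin0 lin1)
  qed
next
  case (step u w)
  have h: "u \<in> K" "u \<noteq> {}" "relint_simplex u \<subseteq> A" "w \<in> K" "w \<noteq> {}" "relint_simplex w \<subseteq> A"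
    "u \<subseteq> w \<or> w \<subseteq> u" using step(1) Rel N by auto
  have "is_simplex w" using K h(4) unfolding simplicial_complex_def by blast
  then obtain c where c: "c \<in> relint_simplex w" using relint_nonempty h(5) by blast
  show ?case
  proof (intro ballI)
    fix a b assume a: "a \<in> relint_simplex u" and b: "b \<in> relint_simplex \<rho>1"
    obtain q' where q': "simplicial_path K q'" "q' 0 = c" "q' 1 = b" "q' ` {0..1} \<subseteq> A"
      using step(3) c b by blast
    have l: "simplicial_path K (linepath a c) \<and> linepath a c ` {0..1} \<subseteq> A"
    proof (cases "u \<subseteq> w")
      case True
      have aw: "a \<in> w" using a relint_sub True by blast
      have cw: "c \<in> w" using c relint_sub by blast
      have seg: "linepath a c ` {0<..1} \<subseteq> relint_simplex w" by (rule seg_fwd[OF aw c])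
      have pin: "path_in (\<Union>K) (linepath a c)" by (rule seg_path_in[OF K h(4) aw cw])
      have sp: "simplicial_path K (linepath a c)"
        by (rule simp_single[OF pin h(4) h(5)]) (rule subset_trans[OF open_sub_half seg])
      have "linepath a c ` {0..1} \<subseteq> A"
      proof
        fix z assume "z \<in> linepath a c ` {0..1}"
        then obtain t where t: "t \<in> {0..1}" "z = linepath a c t" by blast
        show "z \<in> A"
        proof (cases "t = 0")
          case True then show ?thesis using t a h(3) by (auto simp: lin0)
        next
          case False
          then have "t \<in> {0<..1}" using t by auto
          then show ?thesis using t seg h(6) by blast
        qed
      qed
      then show ?thesis using sp by blast
    next
      case False
      then have wu: "w \<subseteq> u" using h(7) by blast
      have au: "a \<in> u" using a relint_sub by blast
      have cu: "c \<in> u" using c relint_sub wu by blast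
      have seg: "linepath a c ` {0..<1} \<subseteq> relint_simplex u" by (rule seg_bwd[OF a cu])
      have pin: "path_in (\<Union>K) (linepath a c)" by (rule seg_path_in[OF K h(1) au cu])
      have sp: "simplicial_path K (linepath a c)"
        by (rule simp_single[OF pin h(1) h(2)]) (rule subset_trans[OF open_sub_half2 seg])
      have "linepath a c ` {0..1} \<subseteq> A"
      proof
        fix z assume "z \<in> linepath a c ` {0..1}"
        then obtain t where t: "t \<in> {0..1}" "z = linepath a c t" by blast
        show "z \<in> A"
        proof (cases "t = 1")
          case True then show ?thesis using t c h(6) by (auto simp: lin1)
        next
          case False
          then have "t \<in> {0..<1}" using t by auto
          then show ?thesis using t seg h(3) by blast
        qed
      qed
      then show ?thesis using sp by blast
    qed
    define g where "g = glue (1/2) (linepath a c) q'"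
    have "simplicial_path K g" unfolding g_def
      by (rule simp_glue) (use l q' in \<open>auto simp: lin1\<close>)
    moreover have "g 0 = a" by (simp add: g_def glue_0 lin0)
    moreover have "g 1 = b" using q'(3) by (simp add: g_def glue_1)
    moreover have "g ` {0..1} \<subseteq> A"
    proof
      fix z assume "z \<in> g ` {0..1}"
      then obtain t where t: "t \<in> {0..1}" "z = g t" by blast
      then have "z \<in> linepath a c ` {0..1} \<union> q' ` {0..1}"
        using glue_image[of "1/2" t] unfolding g_def by simp
      then show "z \<in> A" using l q'(4) by blast
    qed
    ultimately show "\<exists>q. simplicial_path K q \<and> q 0 = a \<and> q 1 = b \<and> q ` {0..1} \<subseteq> A" by blast
  qed
qed



lemma regularize:
  assumes K: "simplicial_complex K"
    and Ainv: "\<forall>\<rho>\<in>K. \<forall>a\<in>relint_simplex \<rho>. \<forall>b\<in>relint_simplex \<rho>. a \<in> A \<longrightarrow> b \<in> A"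
    and q0: "path_in (\<Union>K) q0" and q0A: "q0 ` {0<..<1} \<subseteq> A"
  shows "\<exists>q. simplicial_path K q \<and> q 0 = q0 0 \<and> q 1 = q0 1 \<and> q ` {0<..<1} \<subseteq> A"
proof -
  define N where "N = {\<rho>\<in>K. \<rho> \<noteq> {} \<and> relint_simplex \<rho> \<subseteq> A}"
  define Rel where "Rel = {(\<rho>, \<tau>). \<rho> \<in> N \<and> \<tau> \<in> N \<and> (\<rho> \<subseteq> \<tau> \<or> \<tau> \<subseteq> \<rho>)}"
  have qK: "q0 t \<in> \<Union>K" if "t \<in> {0..1}" for t
  proof -
    have "q0 t \<in> q0 ` {0..1}" using that by blast
    then show ?thesis using q0 unfolding path_in_def path_image_def by blast
  qed
  have node: "\<rho> \<in> N" if "t \<in> {0<..<1}" "\<rho> \<in> K" "q0 t \<in> relint_simplex \<rho>" for t \<rho>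
  proof -
    have "q0 t \<in> A" using q0A that(1) by blast
    then have "relint_simplex \<rho> \<subseteq> A" using Ainv that(2,3) by blast
    moreover have "\<rho> \<noteq> {}" using that(3) relint_sub by blast
    ultimately show ?thesis using that(2) unfolding N_def by blast
  qed
  have loc: "\<exists>d>0. \<forall>t'. dist t' t < d \<longrightarrow> t' \<in> {0<..<1} \<and> (\<exists>\<rho>'\<in>N. \<rho> \<subseteq> \<rho>' \<and> q0 t' \<in> relint_simplex \<rho>')"
    if t: "t \<in> {0<..<1}" and \<rho>: "\<rho> \<in> K" "q0 t \<in> relint_simplex \<rho>" for t \<rho>
  proof -
    obtain e where e: "e > 0" "\<forall>w\<in>\<Union>K. dist w (q0 t) < e \<longrightarrow> (\<exists>\<rho>'\<in>K. \<rho>' \<noteq> {} \<and> \<rho> \<subseteq> \<rho>' \<and> w \<in> relint_simplex \<rho>')"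
      using open_star[OF K \<rho>] by blast
    obtain \<delta> where \<delta>: "\<delta> > 0" "\<forall>t'\<in>{0..1}. dist t' t < \<delta> \<longrightarrow> dist (q0 t') (q0 t) < e"
      using path_cont_at[OF q0 _ e(1), of t] t by auto
    define d where "d = min \<delta> (min t (1 - t))"
    have d: "d > 0" using \<delta>(1) t by (auto simp: d_def)
    have "\<forall>t'. dist t' t < d \<longrightarrow> t' \<in> {0<..<1} \<and> (\<exists>\<rho>'\<in>N. \<rho> \<subseteq> \<rho>' \<and> q0 t' \<in> relint_simplex \<rho>')"
    proof (intro allI impI)
      fix t' assume "dist t' t < d"
      then have t': "t' \<in> {0<..<1}" "dist t' t < \<delta>" using t unfolding d_def dist_real_def by auto
      then have "dist (q0 t') (q0 t) < e" using \<delta>(2) by auto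
      moreover have "q0 t' \<in> \<Union>K" using qK t'(1) by auto
      ultimately obtain \<rho>' where \<rho>': "\<rho>' \<in> K" "\<rho> \<subseteq> \<rho>'" "q0 t' \<in> relint_simplex \<rho>'" using e(2) by blast
      have "\<rho>' \<in> N" by (rule node[OF t'(1) \<rho>'(1) \<rho>'(3)])
      then show "t' \<in> {0<..<1} \<and> (\<exists>\<rho>'\<in>N. \<rho> \<subseteq> \<rho>' \<and> q0 t' \<in> relint_simplex \<rho>')" using t'(1) \<rho>' by blast
    qed
    then show ?thesis using d by blast
  qed
  obtain \<tau>0 where \<tau>0: "\<tau>0 \<in> K" "q0 0 \<in> relint_simplex \<tau>0" using cell_exists[OF K qK[of 0]] by auto
  obtain e0 where e0: "e0 > 0" "\<forall>w\<in>\<Union>K. dist w (q0 0) < e0 \<longrightarrow> (\<exists>\<rho>'\<in>K. \<rho>' \<noteq> {} \<and> \<tau>0 \<subseteq> \<rho>' \<and> w \<in> relint_simplex \<rho>')"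
    using open_star[OF K \<tau>0] by blast
  obtain \<delta>0 where \<delta>0: "\<delta>0 > 0" "\<forall>t'\<in>{0..1}. dist t' 0 < \<delta>0 \<longrightarrow> dist (q0 t') (q0 0) < e0"
    using path_cont_at[OF q0 _ e0(1), of 0] by auto
  define t0 where "t0 = min (\<delta>0/2) (1/2)"
  have t0: "t0 \<in> {0<..<1}" "dist t0 0 < \<delta>0" using \<delta>0(1) by (auto simp: t0_def dist_real_def)
  have "dist (q0 t0) (q0 0) < e0" using \<delta>0(2) t0 by auto
  moreover have "q0 t0 \<in> \<Union>K" using qK t0(1) by auto
  ultimately obtain \<rho>0 where \<rho>0: "\<rho>0 \<in> K" "\<tau>0 \<subseteq> \<rho>0" "q0 t0 \<in> relint_simplex \<rho>0" using e0(2) by blast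
  have \<rho>0N: "\<rho>0 \<in> N" by (rule node[OF t0(1) \<rho>0(1) \<rho>0(3)])
  obtain \<tau>1 where \<tau>1: "\<tau>1 \<in> K" "q0 1 \<in> relint_simplex \<tau>1" using cell_exists[OF K qK[of 1]] by auto
  obtain e1 where e1: "e1 > 0" "\<forall>w\<in>\<Union>K. dist w (q0 1) < e1 \<longrightarrow> (\<exists>\<rho>'\<in>K. \<rho>' \<noteq> {} \<and> \<tau>1 \<subseteq> \<rho>' \<and> w \<in> relint_simplex \<rho>')"
    using open_star[OF K \<tau>1] by blast
  obtain \<delta>1 where \<delta>1: "\<delta>1 > 0" "\<forall>t'\<in>{0..1}. dist t' 1 < \<delta>1 \<longrightarrow> dist (q0 t') (q0 1) < e1"
    using path_cont_at[OF q0 _ e1(1), of 1] by auto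
  define t1 where "t1 = max (1 - \<delta>1/2) (1/2)"
  have t1: "t1 \<in> {0<..<1}" "dist t1 1 < \<delta>1" using \<delta>1(1) by (auto simp: t1_def dist_real_def)
  have "dist (q0 t1) (q0 1) < e1" using \<delta>1(2) t1 by auto
  moreover have "q0 t1 \<in> \<Union>K" using qK t1(1) by auto
  ultimately obtain \<rho>1 where \<rho>1: "\<rho>1 \<in> K" "\<tau>1 \<subseteq> \<rho>1" "q0 t1 \<in> relint_simplex \<rho>1" using e1(2) by blast
  have \<rho>1N: "\<rho>1 \<in> N" by (rule node[OF t1(1) \<rho>1(1) \<rho>1(3)])
  define O1 where "O1 = {t. 0 < t \<and> t < 1 \<and> (\<exists>\<rho>. (\<rho>0, \<rho>) \<in> Rel\<^sup>* \<and> \<rho> \<in> N \<and> q0 t \<in> relint_simplex \<rho>)}"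
  define O2 where "O2 = {t. 0 < t \<and> t < 1 \<and> (\<exists>\<rho>\<in>N. (\<rho>0, \<rho>) \<notin> Rel\<^sup>* \<and> q0 t \<in> relint_simplex \<rho>)}"
  have NK: "\<rho> \<in> K" if "\<rho> \<in> N" for \<rho> using that unfolding N_def by blast
  have "open O1" unfolding open_dist
  proof
    fix t assume "t \<in> O1"
    then obtain \<rho> where t: "t \<in> {0<..<1}" and \<rho>: "(\<rho>0, \<rho>) \<in> Rel\<^sup>*" "\<rho> \<in> N" "q0 t \<in> relint_simplex \<rho>"
      unfolding O1_def by auto
    obtain d where d: "d > 0" "\<forall>t'. dist t' t < d \<longrightarrow> t' \<in> {0<..<1} \<and> (\<exists>\<rho>'\<in>N. \<rho> \<subseteq> \<rho>' \<and> q0 t' \<in> relint_simplex \<rho>')"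
      using loc[OF t NK[OF \<rho>(2)] \<rho>(3)] by blast
    have "\<forall>t'. dist t' t < d \<longrightarrow> t' \<in> O1"
    proof (intro allI impI)
      fix t' assume "dist t' t < d"
      then obtain \<rho>' where t': "t' \<in> {0<..<1}" "\<rho>' \<in> N" "\<rho> \<subseteq> \<rho>'" "q0 t' \<in> relint_simplex \<rho>'"
        using d(2) by blast
      have "(\<rho>, \<rho>') \<in> Rel" unfolding Rel_def using \<rho>(2) t'(2,3) by blast
      then have "(\<rho>0, \<rho>') \<in> Rel\<^sup>*" using \<rho>(1) by (rule rtrancl_into_rtrancl[rotated])
      then show "t' \<in> O1" unfolding O1_def using t' by auto
    qed
    then show "\<exists>e>0. \<forall>y. dist y t < e \<longrightarrow> y \<in> O1" using d(1) by blast
  qed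
  moreover have "open O2" unfolding open_dist
  proof
    fix t assume "t \<in> O2"
    then obtain \<rho> where t: "t \<in> {0<..<1}" and \<rho>: "(\<rho>0, \<rho>) \<notin> Rel\<^sup>*" "\<rho> \<in> N" "q0 t \<in> relint_simplex \<rho>"
      unfolding O2_def by auto
    obtain d where d: "d > 0" "\<forall>t'. dist t' t < d \<longrightarrow> t' \<in> {0<..<1} \<and> (\<exists>\<rho>'\<in>N. \<rho> \<subseteq> \<rho>' \<and> q0 t' \<in> relint_simplex \<rho>')"
      using loc[OF t NK[OF \<rho>(2)] \<rho>(3)] by blast
    have "\<forall>t'. dist t' t < d \<longrightarrow> t' \<in> O2"
    proof (intro allI impI)
      fix t' assume "dist t' t < d"
      then obtain \<rho>' where t': "t' \<in> {0<..<1}" "\<rho>' \<in> N" "\<rho> \<subseteq> \<rho>'" "q0 t' \<in> relint_simplex \<rho>'"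
        using d(2) by blast
      have "(\<rho>', \<rho>) \<in> Rel" unfolding Rel_def using \<rho>(2) t'(2,3) by blast
      then have "(\<rho>0, \<rho>') \<notin> Rel\<^sup>*" using \<rho>(1) by (meson rtrancl_into_rtrancl)
      then show "t' \<in> O2" unfolding O2_def using t' by auto
    qed
    then show "\<exists>e>0. \<forall>y. dist y t < e \<longrightarrow> y \<in> O2" using d(1) by blast
  qed
  moreover have "O1 \<inter> O2 \<inter> {0<..<1} = {}"
  proof (rule ccontr)
    assume "O1 \<inter> O2 \<inter> {0<..<1} \<noteq> {}"
    then obtain t where "t \<in> O1" "t \<in> O2" by blast
    then obtain \<rho> \<rho>' where r: "(\<rho>0, \<rho>) \<in> Rel\<^sup>*" "\<rho> \<in> N" "q0 t \<in> relint_simplex \<rho>"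
      "(\<rho>0, \<rho>') \<notin> Rel\<^sup>*" "\<rho>' \<in> N" "q0 t \<in> relint_simplex \<rho>'"
      unfolding O1_def O2_def by blast
    have "\<rho> = \<rho>'" by (rule cell_unique[OF K NK[OF r(2)] NK[OF r(5)] r(3) r(6)])
    then show False using r(1,4) by blast
  qed
  moreover have "{0<..<1} \<subseteq> O1 \<union> O2"
  proof
    fix t :: real assume t: "t \<in> {0<..<1}"
    then have "q0 t \<in> \<Union>K" using qK by auto
    then obtain \<rho> where \<rho>: "\<rho> \<in> K" "q0 t \<in> relint_simplex \<rho>" using cell_exists[OF K] by blast
    have "\<rho> \<in> N" by (rule node[OF t \<rho>])
    then show "t \<in> O1 \<union> O2" using t \<rho>(2) unfolding O1_def O2_def by auto
  qed
  ultimately have "O1 \<inter> {0<..<1} = {} \<or> O2 \<inter> {0<..<1} = {}"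
    by (intro connectedD[OF connected_Ioo])
  moreover have "t0 \<in> O1" unfolding O1_def using t0(1) \<rho>0N \<rho>0(3) by auto
  ultimately have "O2 \<inter> {0<..<1} = {}" using t0(1) by blast
  then have reach: "(\<rho>0, \<rho>1) \<in> Rel\<^sup>*" using t1(1) \<rho>1N \<rho>1(3) unfolding O2_def by auto
  obtain mid where mid: "simplicial_path K mid" "mid 0 = q0 t0" "mid 1 = q0 t1" "mid ` {0..1} \<subseteq> A"
    using graph_path[OF K reach Rel_def N_def \<rho>1N] \<rho>0(3) \<rho>1(3) by blast
  have \<rho>0': "\<rho>0 \<noteq> {}" "relint_simplex \<rho>0 \<subseteq> A" using \<rho>0N unfolding N_def by auto
  have \<rho>1': "\<rho>1 \<noteq> {}" "relint_simplex \<rho>1 \<subseteq> A" using \<rho>1N unfolding N_def by auto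
  have x0: "q0 0 \<in> \<rho>0" using \<tau>0(2) relint_sub \<rho>0(2) by blast
  have a0: "q0 t0 \<in> \<rho>0" using \<rho>0(3) relint_sub by blast
  have x1: "q0 1 \<in> \<rho>1" using \<tau>1(2) relint_sub \<rho>1(2) by blast
  have b1: "q0 t1 \<in> \<rho>1" using \<rho>1(3) relint_sub by blast
  define s1 where "s1 = linepath (q0 0) (q0 t0)"
  define s2 where "s2 = linepath (q0 t1) (q0 1)"
  have seg1: "s1 ` {0<..1} \<subseteq> relint_simplex \<rho>0" unfolding s1_def by (rule seg_fwd[OF x0 \<rho>0(3)])
  have seg2: "s2 ` {0..<1} \<subseteq> relint_simplex \<rho>1" unfolding s2_def by (rule seg_bwd[OF \<rho>1(3) x1])
  have sp1: "simplicial_path K s1"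
    by (rule simp_single[OF _ \<rho>0(1) \<rho>0'(1)]) (use seg_path_in[OF K \<rho>0(1) x0 a0] subset_trans[OF open_sub_half seg1] in \<open>simp_all add: s1_def\<close>)
  have sp2: "simplicial_path K s2"
    by (rule simp_single[OF _ \<rho>1(1) \<rho>1'(1)]) (use seg_path_in[OF K \<rho>1(1) b1 x1] subset_trans[OF open_sub_half2 seg2] in \<open>simp_all add: s2_def\<close>)
  define inner where "inner = glue (1/2) mid s2"
  have spi: "simplicial_path K inner" unfolding inner_def
    by (rule simp_glue) (use mid sp2 in \<open>auto simp: s2_def lin0\<close>)
  have i0: "inner 0 = q0 t0" using mid(2) by (simp add: inner_def glue_0)
  have i1: "inner 1 = q0 1" by (simp add: inner_def glue_1 s2_def lin1)
  have iA: "inner ` {0<..<1} \<subseteq> A"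
  proof
    fix z assume "z \<in> inner ` {0<..<1}"
    then obtain t where t: "t \<in> {0<..<1}" "z = inner t" by blast
    then have "z \<in> mid ` {0<..1} \<union> s2 ` {0<..<1}" using glue_open[of "1/2" t] unfolding inner_def by simp
    moreover have "mid ` {0<..1} \<subseteq> A" using mid(4) by auto
    moreover have "s2 ` {0<..<1} \<subseteq> A" using subset_trans[OF open_sub_half2 seg2] \<rho>1'(2) by blast
    ultimately show "z \<in> A" by blast
  qed
  define q where "q = glue (1/2) s1 inner"
  have "simplicial_path K q" unfolding q_def
    by (rule simp_glue) (use sp1 spi i0 in \<open>auto simp: s1_def lin1\<close>)
  moreover have "q 0 = q0 0" by (simp add: q_def glue_0 s1_def lin0)
  moreover have "q 1 = q0 1" using i1 by (simp add: q_def glue_1)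
  moreover have "q ` {0<..<1} \<subseteq> A"
  proof
    fix z assume "z \<in> q ` {0<..<1}"
    then obtain t where t: "t \<in> {0<..<1}" "z = q t" by blast
    then have "z \<in> s1 ` {0<..1} \<union> inner ` {0<..<1}" using glue_open[of "1/2" t] unfolding q_def by simp
    moreover have "s1 ` {0<..1} \<subseteq> A" using seg1 \<rho>0'(2) by auto
    ultimately show "z \<in> A" using iA by blast
  qed
  ultimately show ?thesis by blast
qed



fun conjl :: "'p slcs list \<Rightarrow> 'p slcs" where
  "conjl [] = Top"
| "conjl (\<phi> # l) = And \<phi> (conjl l)"

lemma sem_conjl: "x \<in> sem K V (conjl l) \<longleftrightarrow> x \<in> \<Union>K \<and> (\<forall>\<phi>\<in>set l. x \<in> sem K V \<phi>)"
  by (induction l) auto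

lemma logeq_sym: "logeq K V x y \<Longrightarrow> logeq K V y x"
  unfolding logeq_def by blast

lemma logeq_trans: "logeq K V x y \<Longrightarrow> logeq K V y z \<Longrightarrow> logeq K V x z"
  unfolding logeq_def by blast

lemma logeq_refl: "x \<in> \<Union>K \<Longrightarrow> logeq K V x x"
  unfolding logeq_def by blast

lemma logeq_cell:
  assumes M: "polyhedral_model K V" and "\<tau> \<in> K" "x \<in> relint_simplex \<tau>" "y \<in> relint_simplex \<tau>"
  shows "logeq K V x y"
  unfolding logeq_def
  using relint_in_union[OF assms(2,3)] relint_in_union[OF assms(2,4)]
    sem_inv[OF M assms(2,3,4)] sem_inv[OF M assms(2,4,3)] by blast

definition psel :: "'a::euclidean_space set set \<Rightarrow> ('p \<Rightarrow> 'a set) \<Rightarrow> 'a \<Rightarrow> 'a set \<Rightarrow> 'p slcs" where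
  "psel K V z c = (if \<exists>\<phi>. z \<in> sem K V \<phi> \<and> c \<inter> sem K V \<phi> = {}
     then SOME \<phi>. z \<in> sem K V \<phi> \<and> c \<inter> sem K V \<phi> = {} else Top)"

definition chi :: "'a::euclidean_space set set \<Rightarrow> ('p \<Rightarrow> 'a set) \<Rightarrow> 'a \<Rightarrow> 'p slcs" where
  "chi K V z = conjl (map (psel K V z) (SOME l. set l = cells K))"

lemma psel_z: assumes zK: "z \<in> \<Union>K" shows "z \<in> sem K V (psel K V z c)"
proof (cases "\<exists>\<phi>. z \<in> sem K V \<phi> \<and> c \<inter> sem K V \<phi> = {}")
  case True
  then have "z \<in> sem K V (SOME \<phi>. z \<in> sem K V \<phi> \<and> c \<inter> sem K V \<phi> = {})" by (rule someI2_ex) blast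
  then show ?thesis using True by (simp add: psel_def)
next
  case False
  then have "psel K V z c = Top" unfolding psel_def by (simp only: if_False)
  then show ?thesis using zK by simp
qed

lemma psel_c: "\<exists>\<phi>. z \<in> sem K V \<phi> \<and> c \<inter> sem K V \<phi> = {} \<Longrightarrow> c \<inter> sem K V (psel K V z c) = {}"
proof -
  assume h: "\<exists>\<phi>. z \<in> sem K V \<phi> \<and> c \<inter> sem K V \<phi> = {}"
  then have "c \<inter> sem K V (SOME \<phi>. z \<in> sem K V \<phi> \<and> c \<inter> sem K V \<phi> = {}) = {}" by (rule someI2_ex) blast
  then show ?thesis using h by (simp add: psel_def)
qed

lemma cells_list:
  assumes K: "simplicial_complex K" shows "set (SOME l. set l = cells K) = cells K"
proof -
  have "cells K = relint_simplex ` {\<sigma>\<in>K. \<sigma> \<noteq> {}}" unfolding cells_def by blast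
  moreover have "finite K" using K unfolding simplicial_complex_def by blast
  ultimately have "finite (cells K)" by simp
  then have "\<exists>l. set l = cells K" by (rule finite_list)
  then show ?thesis by (rule someI_ex)
qed

lemma chi_char:
  assumes M: "polyhedral_model K V" and z: "z \<in> \<Union>K"
  shows "w \<in> sem K V (chi K V z) \<longleftrightarrow> logeq K V w z"
proof -
  have K: "simplicial_complex K" using M by (simp add: polyhedral_model_def)
  have ch: "w \<in> sem K V (chi K V z) \<longleftrightarrow> w \<in> \<Union>K \<and> (\<forall>c\<in>cells K. w \<in> sem K V (psel K V z c))"
    unfolding chi_def sem_conjl using cells_list[OF K] by auto
  show ?thesis
  proof
    assume w: "w \<in> sem K V (chi K V z)"
    then have wK: "w \<in> \<Union>K" and wc: "\<forall>c\<in>cells K. w \<in> sem K V (psel K V z c)" using ch by auto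
    obtain \<rho> where \<rho>: "\<rho> \<in> K" "\<rho> \<noteq> {}" "w \<in> relint_simplex \<rho>" using cell_exists[OF K wK] by blast
    have cc: "relint_simplex \<rho> \<in> cells K" unfolding cells_def using \<rho>(1,2) by blast
    have nex: "\<not> (\<exists>\<phi>. z \<in> sem K V \<phi> \<and> relint_simplex \<rho> \<inter> sem K V \<phi> = {})"
    proof
      assume "\<exists>\<phi>. z \<in> sem K V \<phi> \<and> relint_simplex \<rho> \<inter> sem K V \<phi> = {}"
      then have "relint_simplex \<rho> \<inter> sem K V (psel K V z (relint_simplex \<rho>)) = {}" by (rule psel_c)
      moreover have "w \<in> sem K V (psel K V z (relint_simplex \<rho>))" using wc cc by blast
      ultimately show False using \<rho>(3) by blast
    qed
    have fwd: "w \<in> sem K V \<phi>" if zs: "z \<in> sem K V \<phi>" for \<phi>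
    proof -
      obtain v where "v \<in> relint_simplex \<rho>" "v \<in> sem K V \<phi>" using nex zs by blast
      then show ?thesis using sem_inv[OF M \<rho>(1) _ \<rho>(3)] by blast
    qed
    have bwd: "z \<in> sem K V \<phi>" if "w \<in> sem K V \<phi>" for \<phi>
    proof (rule ccontr)
      assume "z \<notin> sem K V \<phi>"
      then have "z \<in> sem K V (Neg \<phi>)" using z by simp
      then have "w \<in> sem K V (Neg \<phi>)" by (rule fwd)
      then show False using that by simp
    qed
    show "logeq K V w z" unfolding logeq_def using wK z fwd bwd by blast
  next
    assume l: "logeq K V w z"
    then have "w \<in> \<Union>K" unfolding logeq_def by blast
    moreover have "\<forall>c\<in>cells K. w \<in> sem K V (psel K V z c)"
      using l psel_z[OF z] unfolding logeq_def by blast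
    ultimately show "w \<in> sem K V (chi K V z)" using ch by blast
  qed
qed

lemma one_step:
  assumes M: "polyhedral_model K V" and xy: "logeq K V x y" and p: "path_in (\<Union>K) p" "p 0 = x"
    and \<sigma>: "\<sigma> \<in> K" "p ` {0<..<1} \<subseteq> relint_simplex \<sigma>"
  shows "\<exists>q. simplicial_path K q \<and> q 0 = y \<and> logeq K V (p 1) (q 1) \<and> (\<forall>u\<in>{0<..<1}. logeq K V (p u) (q u))"
proof -
  have K: "simplicial_complex K" using M by (simp add: polyhedral_model_def)
  define c where "c = p (1/2)"
  have c: "c \<in> relint_simplex \<sigma>" using \<sigma>(2) unfolding c_def by auto
  have cK: "c \<in> \<Union>K" using relint_in_union[OF \<sigma>(1) c] .
  have p1K: "p 1 \<in> \<Union>K"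
  proof -
    have "p 1 \<in> p ` {0..1}" by auto
    then show ?thesis using p(1) unfolding path_in_def path_image_def by blast
  qed
  have pc: "logeq K V (p u) c" if "u \<in> {0<..<1}" for u
    using logeq_cell[OF M \<sigma>(1) _ c] \<sigma>(2) that by blast
  define \<Gamma> where "\<Gamma> = Gamma (chi K V c) (chi K V (p 1))"
  have "x \<in> sem K V \<Gamma>"
  proof -
    have "x \<in> \<Union>K" using xy unfolding logeq_def by blast
    moreover have "p ` {0<..<1} \<subseteq> sem K V (chi K V c)" using pc chi_char[OF M cK] by blast
    moreover have "p 1 \<in> sem K V (chi K V (p 1))" using chi_char[OF M p1K] logeq_refl[OF p1K] by blast
    ultimately show ?thesis unfolding \<Gamma>_def using p by auto
  qed
  then have "y \<in> sem K V \<Gamma>" using xy unfolding logeq_def by blast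
  then obtain q0 where q0: "path_in (\<Union>K) q0" "q0 0 = y" "q0 ` {0<..<1} \<subseteq> sem K V (chi K V c)"
    "q0 1 \<in> sem K V (chi K V (p 1))" unfolding \<Gamma>_def by auto
  have Ainv: "\<forall>\<rho>\<in>K. \<forall>a\<in>relint_simplex \<rho>. \<forall>b\<in>relint_simplex \<rho>. a \<in> sem K V (chi K V c) \<longrightarrow> b \<in> sem K V (chi K V c)"
    using sem_inv[OF M] by blast
  obtain q where q: "simplicial_path K q" "q 0 = q0 0" "q 1 = q0 1" "q ` {0<..<1} \<subseteq> sem K V (chi K V c)"
    using regularize[OF K Ainv q0(1,3)] by blast
  have "logeq K V (q 1) (p 1)" using q(3) q0(4) chi_char[OF M p1K] by simp
  then have e1: "logeq K V (p 1) (q 1)" by (rule logeq_sym)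
  have "logeq K V (p u) (q u)" if u: "u \<in> {0<..<1}" for u
  proof -
    have "q u \<in> sem K V (chi K V c)" using q(4) u by blast
    then have "logeq K V (q u) c" using chi_char[OF M cK] by blast
    then show ?thesis using pc[OF u] by (meson logeq_sym logeq_trans)
  qed
  then show ?thesis using q(1,2) q0(2) e1 by auto
qed



lemma main_ind:
  assumes M: "polyhedral_model K V"
  shows "\<forall>x y \<pi> s \<sigma>. logeq K V x y \<and> path_in (\<Union>K) \<pi> \<and> \<pi> 0 = x \<and> s 0 = 0 \<and> s k = 1 \<and>
      (\<forall>i<k. s i < s (Suc i)) \<and>
      (\<forall>i\<in>{1..k}. \<sigma> i \<in> K \<and> \<sigma> i \<noteq> {} \<and> \<pi> ` {s (i - 1)<..<s i} \<subseteq> relint_simplex (\<sigma> i)) \<longrightarrow>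
      (\<exists>\<pi>'. simplicial_path K \<pi>' \<and> \<pi>' 0 = y \<and> (\<forall>t\<in>{0..1}. logeq K V (\<pi> t) (\<pi>' t)))"
proof (induction k)
  case 0
  show ?case
  proof (intro allI impI)
    fix x y \<pi> s \<sigma>
    assume "logeq K V x y \<and> path_in (\<Union>K) \<pi> \<and> \<pi> 0 = x \<and> s 0 = 0 \<and> s (0::nat) = 1 \<and>
      (\<forall>i<0. s i < s (Suc i)) \<and>
      (\<forall>i\<in>{1..0}. \<sigma> i \<in> K \<and> \<sigma> i \<noteq> {} \<and> \<pi> ` {s (i - 1)<..<s i} \<subseteq> relint_simplex (\<sigma> i))"
    then have "(s 0 :: real) = 0" "s 0 = 1" by blast+
    then show "\<exists>\<pi>'. simplicial_path K \<pi>' \<and> \<pi>' 0 = y \<and> (\<forall>t\<in>{0..1}. logeq K V (\<pi> t) (\<pi>' t))" by simp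
  qed
next
  case (Suc k)
  show ?case
  proof (intro allI impI)
    fix x y \<pi> s \<sigma>
    assume H: "logeq K V x y \<and> path_in (\<Union>K) \<pi> \<and> \<pi> 0 = x \<and> s 0 = 0 \<and> s (Suc k) = 1 \<and>
      (\<forall>i<Suc k. s i < s (Suc i)) \<and>
      (\<forall>i\<in>{1..Suc k}. \<sigma> i \<in> K \<and> \<sigma> i \<noteq> {} \<and> \<pi> ` {s (i - 1)<..<s i} \<subseteq> relint_simplex (\<sigma> i))"
    then have xy: "logeq K V x y" and \<pi>: "path_in (\<Union>K) \<pi>" "\<pi> 0 = x" and s0: "s 0 = 0"
      and sk: "s (Suc k) = 1" and mono: "\<forall>i<Suc k. s i < s (Suc i)"
      and pieces: "\<forall>i\<in>{1..Suc k}. \<sigma> i \<in> K \<and> \<sigma> i \<noteq> {} \<and> \<pi> ` {s (i - 1)<..<s i} \<subseteq> relint_simplex (\<sigma> i)"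
      by auto
    define s1 where "s1 = s 1"
    have s1p: "0 < s1" using mono s0 unfolding s1_def by (metis One_nat_def zero_less_Suc)
    have s1le: "s1 \<le> 1" using smono[OF mono, of 1 "Suc k"] sk unfolding s1_def by simp
    have "(1::nat) \<in> {1..Suc k}" by simp
    then have piece1: "\<sigma> 1 \<in> K" "\<pi> ` {s (1 - 1)<..<s 1} \<subseteq> relint_simplex (\<sigma> 1)"
      using pieces by blast+
    then have piece1: "\<sigma> 1 \<in> K" "\<pi> ` {s 0<..<s 1} \<subseteq> relint_simplex (\<sigma> 1)" by simp_all
    define p where "p = subpath 0 s1 \<pi>"
    have pv: "p u = \<pi> (s1 * u)" for u by (simp add: p_def subpath_def)
    have pp: "path_in (\<Union>K) p"
    proof -
      have "path_image p \<subseteq> path_image \<pi>" unfolding p_def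
        using s1p s1le by (intro path_image_subpath_subset) auto
      moreover have "path p" unfolding p_def using \<pi>(1) s1p s1le
        by (intro path_subpath) (auto simp: path_in_def)
      ultimately show ?thesis using \<pi>(1) by (auto simp: path_in_def)
    qed
    have p0: "p 0 = x" using \<pi>(2) by (simp add: pv)
    have pint: "p ` {0<..<1} \<subseteq> relint_simplex (\<sigma> 1)"
    proof
      fix z assume "z \<in> p ` {0<..<1}"
      then obtain u where u: "0 < u" "u < 1" "z = \<pi> (s1 * u)" by (auto simp: pv)
      have "s1 * u \<in> {s 0<..<s 1}" using u s1p s0 unfolding s1_def by auto
      then show "z \<in> relint_simplex (\<sigma> 1)" using piece1(2) u(3) by blast
    qed
    obtain q where q: "simplicial_path K q" "q 0 = y" "logeq K V (p 1) (q 1)"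
      "\<forall>u\<in>{0<..<1}. logeq K V (p u) (q u)"
      using one_step[OF M xy pp p0 piece1(1) pint] by blast
    have qall: "logeq K V (p u) (q u)" if uu: "u \<in> {0..1}" for u
    proof -
      consider "u = 0" | "u = 1" | "u \<in> {0<..<1}" using uu by fastforce
      then show ?thesis
      proof cases
        case 1 then show ?thesis using p0 q(2) xy by simp
      next
        case 2 then show ?thesis using q(3) by simp
      next
        case 3 then show ?thesis using q(4) by blast
      qed
    qed
    show "\<exists>\<pi>'. simplicial_path K \<pi>' \<and> \<pi>' 0 = y \<and> (\<forall>t\<in>{0..1}. logeq K V (\<pi> t) (\<pi>' t))"
    proof (cases "k = 0")
      case True
      then have "s1 = 1" using sk unfolding s1_def by simp
      then have "p = \<pi>" by (simp add: pv[abs_def])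
      then show ?thesis using q(1,2) qall by blast
    next
      case False
      have s2: "s1 < s 2" using mono False unfolding s1_def by (simp add: numeral_2_eq_2)
      have "s 2 \<le> 1" using smono[OF mono, of 2 "Suc k"] sk False by simp
      then have s1l: "s1 < 1" using s2 by simp
      define r where "r = subpath s1 1 \<pi>"
      have rv: "r u = \<pi> ((1 - s1) * u + s1)" for u by (simp add: r_def subpath_def)
      have rp: "path_in (\<Union>K) r"
      proof -
        have "path_image r \<subseteq> path_image \<pi>" unfolding r_def
          using s1p s1le by (intro path_image_subpath_subset) auto
        moreover have "path r" unfolding r_def using \<pi>(1) s1p s1le
          by (intro path_subpath) (auto simp: path_in_def)
        ultimately show ?thesis using \<pi>(1) by (auto simp: path_in_def)
      qed
      have r0: "r 0 = \<pi> s1" by (simp add: rv)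
      define s' where "s' i = (s (Suc i) - s1) / (1 - s1)" for i
      define \<sigma>' where "\<sigma>' i = \<sigma> (Suc i)" for i
      have ls: "logeq K V (\<pi> s1) (q 1)" using q(3) by (simp add: pv)
      have s'0: "s' 0 = 0" by (simp add: s'_def s1_def)
      have s'k: "s' k = 1" using sk s1l by (simp add: s'_def)
      have s'm: "\<forall>i<k. s' i < s' (Suc i)"
      proof (intro allI impI)
        fix i assume "i < k"
        then have "s (Suc i) < s (Suc (Suc i))" using mono by simp
        then show "s' i < s' (Suc i)" using s1l unfolding s'_def by (simp add: divide_strict_right_mono)
      qed
      have s'p: "\<forall>i\<in>{1..k}. \<sigma>' i \<in> K \<and> \<sigma>' i \<noteq> {} \<and> r ` {s' (i - 1)<..<s' i} \<subseteq> relint_simplex (\<sigma>' i)"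
      proof
        fix i assume i: "i \<in> {1..k}"
        then have si: "Suc i \<in> {1..Suc k}" by auto
        have P: "\<sigma> (Suc i) \<in> K" "\<sigma> (Suc i) \<noteq> {}" "\<pi> ` {s i<..<s (Suc i)} \<subseteq> relint_simplex (\<sigma> (Suc i))"
          using pieces si by (metis diff_Suc_1)+
        have "r ` {s' (i - 1)<..<s' i} \<subseteq> relint_simplex (\<sigma> (Suc i))"
        proof
          fix z assume "z \<in> r ` {s' (i - 1)<..<s' i}"
          then obtain u where u: "s' (i - 1) < u" "u < s' i" "z = r u" by auto
          have "Suc (i - 1) = i" using i by auto
          then have e0: "s (Suc (i - 1)) = s i" by simp
          have e1: "s' (i - 1) = (s i - s1) / (1 - s1)" unfolding s'_def by (simp only: e0)
          have e2: "s' i = (s (Suc i) - s1) / (1 - s1)" by (simp only: s'_def)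
          have "(s i - s1) / (1 - s1) < u" "u < (s (Suc i) - s1) / (1 - s1)" using u(1,2) e1 e2 by linarith+
          then have "s i - s1 < (1 - s1) * u" "(1 - s1) * u < s (Suc i) - s1" using s1l
            by (simp_all add: divide_less_eq less_divide_eq mult.commute)
          then have "(1 - s1) * u + s1 \<in> {s i<..<s (Suc i)}" by auto
          then show "z \<in> relint_simplex (\<sigma> (Suc i))" using P(3) u(3) rv by blast
        qed
        then show "\<sigma>' i \<in> K \<and> \<sigma>' i \<noteq> {} \<and> r ` {s' (i - 1)<..<s' i} \<subseteq> relint_simplex (\<sigma>' i)"
          using P unfolding \<sigma>'_def by blast
      qed
      obtain \<pi>'' where \<pi>'': "simplicial_path K \<pi>''" "\<pi>'' 0 = q 1" "\<forall>t\<in>{0..1}. logeq K V (r t) (\<pi>'' t)"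
        using Suc.IH ls rp r0 s'0 s'k s'm s'p by blast
      define \<pi>' where "\<pi>' = glue s1 q \<pi>''"
      have "simplicial_path K \<pi>'" unfolding \<pi>'_def using s1p s1l q(1) \<pi>''(1,2) by (intro simp_glue) auto
      moreover have "\<pi>' 0 = y" using s1p q(2) by (simp add: \<pi>'_def glue_0)
      moreover have "\<forall>t\<in>{0..1}. logeq K V (\<pi> t) (\<pi>' t)"
      proof
        fix t :: real assume t: "t \<in> {0..1}"
        show "logeq K V (\<pi> t) (\<pi>' t)"
        proof (cases "t \<le> s1")
          case True
          have "t / s1 \<in> {0..1}" using t True s1p by (auto simp: divide_simps)
          moreover have "p (t / s1) = \<pi> t" using s1p by (simp add: pv)
          moreover have "\<pi>' t = q (t / s1)" using True by (simp add: \<pi>'_def glue_def)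
          ultimately show ?thesis using qall by metis
        next
          case False
          have u: "(t - s1) / (1 - s1) \<in> {0..1}" using t False s1l by (auto simp: divide_simps)
          have "r ((t - s1) / (1 - s1)) = \<pi> t" using s1l by (simp add: rv)
          moreover have "\<pi>' t = \<pi>'' ((t - s1) / (1 - s1))" using False by (simp add: \<pi>'_def glue_def)
          ultimately show ?thesis using \<pi>''(3) u by metis
        qed
      qed
      ultimately show ?thesis by blast
    qed
  qed
qed

lemma main_step:
  assumes M: "polyhedral_model K V" and xy: "logeq K V x y"
    and \<pi>: "simplicial_path K \<pi>" "\<pi> 0 = x"
  shows "\<exists>\<pi>'. simplicial_path K \<pi>' \<and> \<pi>' 0 = y \<and> (\<forall>t\<in>{0..1}. logeq K V (\<pi> t) (\<pi>' t))"
proof -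
  obtain k s \<sigma> where H: "path_in (\<Union>K) \<pi>" "s 0 = 0" "s k = 1" "\<forall>i<k. s i < s (Suc i)"
    "\<forall>i\<in>{1..k}. \<sigma> i \<in> K \<and> \<sigma> i \<noteq> {} \<and> \<pi> ` {s (i - 1)<..<s i} \<subseteq> relint_simplex (\<sigma> i)"
    using \<pi>(1) unfolding simplicial_path_def by blast
  show ?thesis using main_ind[OF M, of k] xy \<pi>(2) H by blast
qed

theorem mainTheorem13:
  fixes K :: "'a::euclidean_space set set" and V :: "'p::finite \<Rightarrow> 'a set"
  assumes "polyhedral_model K V"
  shows "simplicial_bisimulation K V (logeq K V)"
  unfolding simplicial_bisimulation_def
proof (intro conjI allI impI)
  fix x y assume "logeq K V x y"
  then show "x \<in> \<Union>K" "y \<in> \<Union>K" unfolding logeq_def by blast+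
next
  fix x y p assume "logeq K V x y"
  then have "x \<in> sem K V (Atom p) \<longleftrightarrow> y \<in> sem K V (Atom p)" unfolding logeq_def by blast
  then show "x \<in> V p \<longleftrightarrow> y \<in> V p" by simp
next
  fix x y \<pi>x assume "logeq K V x y" "simplicial_path K \<pi>x \<and> \<pi>x 0 = x"
  then show "\<exists>\<pi>y. simplicial_path K \<pi>y \<and> \<pi>y 0 = y \<and> (\<forall>t\<in>{0..1}. logeq K V (\<pi>x t) (\<pi>y t))"
    using main_step[OF assms] by blast
next
  fix x y \<pi>y assume xy: "logeq K V x y" and h: "simplicial_path K \<pi>y \<and> \<pi>y 0 = y"
  obtain \<pi>x where \<pi>x: "simplicial_path K \<pi>x" "\<pi>x 0 = x" "\<forall>t\<in>{0..1}. logeq K V (\<pi>y t) (\<pi>x t)"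
    using main_step[OF assms logeq_sym[OF xy]] h by blast
  then show "\<exists>\<pi>x. simplicial_path K \<pi>x \<and> \<pi>x 0 = x \<and> (\<forall>t\<in>{0..1}. logeq K V (\<pi>x t) (\<pi>y t))"
    using logeq_sym by blast
qed

end
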